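(* For $\alpha=ae^{i\phi}\in\mathbb{C}$ with $a\ge0$, $\phi\in\mathbb{R}$, set \[J(\alpha)=\frac1\pi\int_0^\pi\log\big(1-2a\cos(\theta-\phi)+a^2\big)\sin^2\theta\,d\theta.\] Then for $0<|\alpha|\le1$, $\alpha\neq\pm1$, \[J(\alpha)=\frac{|\alpha|^2}{4}\cos2\phi-\frac{1}{2\pi}\operatorname{Im}\Big[\Big(\alpha-\frac1\alpha\Big)-\Big(\alpha^2-\frac1{\alpha^2}\Big)\operatorname{arctanh}\alpha+4\operatorname{Li}_2(\alpha)-\operatorname{Li}_2(\alpha^2)\Big],\] and for $|\alpha|>1$, $J(\alpha)=J(\alpha/|\alpha|^2)+\log|\alpha|$.
   Context: Here $\operatorname{Li}_2(z)=\sum_{n\ge1}z^n/n^2$ and $\operatorname{arctanh}z=\sum_{n\ge1,\ n\text{ odd}}z^n/n$ (power series, for $|z|\le1$, $z\neq\pm1$ in the latter), and $\operatorname{Im}$ is the usual imaginary part of a complex number. (The same identity holds with $i$ replaced by any unit imaginary quaternion $I$, viewing $\alpha\in\mathbb{R}+\mathbb{R}I\cong\mathbb{C}$.) *)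

theory Defs
  imports "HOL-Analysis.Analysis"
begin

definition Li2 :: "complex \<Rightarrow> complex" where
  "Li2 z = (\<Sum>n. z ^ (Suc n) / (of_nat (Suc n))^2)"

definition arctanh_ps :: "complex \<Rightarrow> complex" where
  "arctanh_ps z = (\<Sum>n. if odd n then z ^ n / of_nat n else 0)"

definition J :: "real \<Rightarrow> real \<Rightarrow> real" where
  "J a \<phi> = (1 / pi) * integral {0..pi}
      (\<lambda>\<theta>. ln (1 - 2 * a * cos (\<theta> - \<phi>) + a^2) * (sin \<theta>)^2)"

end

theory Submission
  imports Defs
begin


lemma exp_int_pi:
  fixes m :: int
  shows "exp (\<i> * of_int m * of_real pi) = (if even m then 1 else -1)"
proof -
  have "exp (\<i> * of_int m * of_real pi) = cis (of_int m * pi)"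
    by (simp add: cis_conv_exp mult_ac)
  also have "\<dots> = (if even m then 1 else -1)"
  proof (cases "even m")
    case True
    then obtain k where k: "m = 2 * k" by blast
    have "cis (of_int m * pi) = cis (2 * pi * of_int k)" by (simp add: k mult_ac)
    also have "\<dots> = 1" by (rule cis_multiple_2pi) simp
    finally show ?thesis using True by simp
  next
    case False
    then obtain k where k: "m = 2 * k + 1" by (metis oddE)
    have "cis (of_int m * pi) = cis (2 * pi * of_int k + pi)" 
      by (simp add: k algebra_simps)
    also have "\<dots> = cis (2 * pi * of_int k) * cis pi" by (simp only: cis_mult)
    also have "\<dots> = -1" by simp
    finally show ?thesis using False by simp
  qed
  finally show ?thesis .
qed

lemma exp_int_integral:
  fixes m :: int
  assumes "m \<noteq> 0"
  shows "((\<lambda>t. exp (\<i> * of_int m * of_real t)) has_integral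
          ((exp (\<i> * of_int m * of_real pi) - 1) / (\<i> * of_int m))) {0..pi}"
proof -
  have d0: "((\<lambda>z. exp (\<i> * of_int m * z) / (\<i> * of_int m)) has_field_derivative
            exp (\<i> * of_int m * of_real t)) (at (of_real t))" for t
    using assms
    by (auto intro!: derivative_eq_intros simp: field_simps)
  have d: "((\<lambda>t. exp (\<i> * of_int m * of_real t) / (\<i> * of_int m)) has_vector_derivative
            exp (\<i> * of_int m * of_real t)) (at t within {0..pi})" for t
    using has_vector_derivative_real_field[OF d0] by simp
  show ?thesis
    using fundamental_theorem_of_calculus[OF _ d] by (simp add: diff_divide_distrib)
qed

definition E :: "int \<Rightarrow> complex" where
  "E m = (if m = 0 then of_real pi else (if even m then 0 else 2 * \<i> / of_int m))"

lemma E_integral: "((\<lambda>t. exp (\<i> * of_int m * of_real t)) has_integral E m) {0..pi}"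
proof (cases "m = 0")
  case True
  then show ?thesis using has_integral_const_real[of "1::complex" 0 pi] by (simp add: E_def scaleR_conv_of_real)
next
  case False
  have "(exp (\<i> * of_int m * of_real pi) - 1) / (\<i> * of_int m) = E m"
    using False unfolding exp_int_pi by (auto simp: E_def field_simps)
  then show ?thesis using exp_int_integral[OF False] by simp
qed

lemma sin_sq_exp:
  fixes t :: real
  shows "exp (- \<i> * of_nat N * of_real t) * (of_real (sin t))^2 =
     (2 * exp (\<i> * of_int (- int N) * of_real t) - exp (\<i> * of_int (2 - int N) * of_real t)
      - exp (\<i> * of_int (- int N - 2) * of_real t)) / 4"
proof -
  have s: "of_real (sin t) = (exp (\<i> * of_real t) - exp (- (\<i> * of_real t))) / (2 * \<i>)"
    by (simp add: sin_of_real[symmetric] sin_exp_eq)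
  show ?thesis unfolding s
    by (simp add: power2_eq_square field_simps mult_exp_exp)
qed

lemma alg: fixes x :: complex assumes "x\<noteq>0" "x\<noteq>2" "x\<noteq>-2"
  shows "(2*(2*\<i>/(-x)) - 2*\<i>/(2-x) - 2*\<i>/(-x-2))/4 = 4*\<i>/(x*(x^2-4))"
proof -
  have a: "x-2\<noteq>0" "x+2\<noteq>0" "2-x\<noteq>0" "-x-2\<noteq>0" using assms by (auto simp: algebra_simps)
    (metis add.inverse_inverse add_diff_cancel_right' diff_0 minus_diff_eq)+
  have e: "x^2-4 = (x-2)*(x+2)" by (simp add: algebra_simps power2_eq_square)
  have nz: "x*(x^2-4) \<noteq> 0" unfolding e using a assms(1) by simp
  have g: "x * (x * (x * 4)) - x * 16 \<noteq> 0"
  proof -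
    have "x * (x * (x * 4)) - x * 16 = 4*(x*(x^2-4))" by (simp add: algebra_simps power2_eq_square)
    then show ?thesis using nz by simp
  qed
  have "(2*(2*\<i>/(-x)) - 2*\<i>/(2-x) - 2*\<i>/(-x-2))/4 * (x*(x^2-4)) = 4*\<i>"
    unfolding e using a assms(1) g by (simp add: field_simps)
  then show ?thesis using nz by (simp add: eq_divide_eq)
qed

definition Kc :: "nat \<Rightarrow> complex" where
  "Kc N = (if N = 2 then - of_real pi / 4 else if odd N then 4 * \<i> / (of_nat N * ((of_nat N)^2 - 4)) else 0)"

lemma K_integral:
  assumes "N \<noteq> 0"
  shows "((\<lambda>t. exp (- \<i> * of_nat N * of_real t) * (of_real (sin t))^2) has_integral Kc N) {0..pi}"
proof -
  have i: "((\<lambda>t. (2 * exp (\<i> * of_int (- int N) * of_real t) - exp (\<i> * of_int (2 - int N) * of_real t)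
      - exp (\<i> * of_int (- int N - 2) * of_real t)) / 4) has_integral
      (2 * E (- int N) - E (2 - int N) - E (- int N - 2)) / 4) {0..pi}"
    by (intro has_integral_divide has_integral_diff has_integral_mult_right E_integral)
  have v: "(2 * E (- int N) - E (2 - int N) - E (- int N - 2)) / 4 = Kc N"
  proof (cases "odd N")
    case True
    then have o1: "odd (- int N)" "odd (2 - int N)" "odd (- int N - 2)" by auto
    have nz: "- int N \<noteq> 0" "2 - int N \<noteq> 0" "- int N - 2 \<noteq> 0" by (metis o1 even_zero)+
    have nz2: "(of_nat N :: complex) \<noteq> 2" "(of_nat N :: complex) \<noteq> -2" "(of_nat N :: complex) \<noteq> 0"
    proof -
      have "N \<noteq> 2" "N \<noteq> 0" using True by (auto, presburger)
      moreover have "(of_nat N :: complex) \<noteq> -2"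
      proof
        assume "(of_nat N :: complex) = -2"
        then have "Re (of_nat N) = Re (-2)" by simp
        then show False by simp
      qed
      ultimately show "(of_nat N :: complex) \<noteq> 2" "(of_nat N :: complex) \<noteq> -2" "(of_nat N :: complex) \<noteq> 0"
        by (metis of_nat_eq_iff of_nat_numeral, simp, simp)
    qed
    have "N \<noteq> 2" using True by auto
    have ev: "E (- int N) = 2*\<i>/(- of_nat N)" "E (2 - int N) = 2*\<i>/(2 - of_nat N)"
       "E (- int N - 2) = 2*\<i>/(- of_nat N - 2)"
      using o1 nz by (simp_all add: E_def)
    show ?thesis unfolding ev Kc_def using alg[OF nz2(3,1,2)] True \<open>N \<noteq> 2\<close> by simp
  next
    case False
    show ?thesis
    proof (cases "N = 2")
      case True
      then show ?thesis by (simp add: E_def Kc_def)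
    next
      case N2: False
      have "E (- int N) = 0" "E (2 - int N) = 0" "E (- int N - 2) = 0"
        using False N2 assms by (auto simp: E_def)
      then show ?thesis using False N2 by (simp add: Kc_def)
    qed
  qed
  show ?thesis using i unfolding v sin_sq_exp[symmetric] .
qed



definition Sc :: "nat \<Rightarrow> complex" where
  "Sc k = 1 / ((of_nat (2*k+1))^2 * ((of_nat (2*k+1))^2 - 4))"

definition Sfun :: "complex \<Rightarrow> complex" where
  "Sfun z = (\<Sum>k. z ^ (2*k+1) * Sc k)"

lemma Sc_bound: "norm (Sc k) \<le> inverse (real (Suc k) ^ 2)"
proof -
  have "Sc k = of_real (1 / ((real (2*k+1))^2 * ((real (2*k+1))^2 - 4)))"
    by (simp add: Sc_def)
  then have "norm (Sc k) = 1 / \<bar>(real (2*k+1))^2 * ((real (2*k+1))^2 - 4)\<bar>"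
    by (simp only: norm_of_real abs_divide abs_one)
  also have "\<dots> \<le> inverse (real (Suc k) ^ 2)"
  proof (cases k)
    case 0 then show ?thesis by simp
  next
    case (Suc j)
    have "(real (2*k+1))^2 - 4 \<ge> 1" using Suc by (simp add: power2_eq_square algebra_simps)
    moreover have "(real (2*k+1))^2 \<ge> (real (Suc k))^2" by (simp add: power_mono)
    moreover have "(real (2*k+1))^2 * 1 \<le> (real (2*k+1))^2 * ((real (2*k+1))^2 - 4)"
      using calculation(1) by (intro mult_left_mono) auto
    ultimately have "(real (Suc k))^2 \<le> (real (2*k+1))^2 * ((real (2*k+1))^2 - 4)"
      by linarith
    moreover have "(real (Suc k))^2 > 0" by simp
    ultimately show ?thesis
      by (simp add: abs_of_pos divide_inverse le_imp_inverse_le del: of_nat_Suc)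
  qed
  finally show ?thesis .
qed

lemma summable_invsq: "summable (\<lambda>k. inverse (real (Suc k) ^ 2))"
  using inverse_power_summable[of 2, where 'a=real] summable_Suc_iff[of "\<lambda>n. inverse (real n ^ 2)"]
  by simp

lemma Sfun_term_bound:
  assumes "norm z \<le> 1"
  shows "norm (z ^ (2*k+1) * Sc k) \<le> inverse (real (Suc k) ^ 2)"
proof -
  have "norm (z ^ (2*k+1) * Sc k) = norm z ^ (2*k+1) * norm (Sc k)" by (simp add: norm_mult norm_power)
  also have "\<dots> \<le> 1 * norm (Sc k)"
    by (intro mult_right_mono power_le_one) (auto simp: assms)
  also have "\<dots> \<le> inverse (real (Suc k) ^ 2)" using Sc_bound by simp
  finally show ?thesis .
qed

lemma Sfun_summable:
  assumes "norm z \<le> 1"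
  shows "summable (\<lambda>k. z ^ (2*k+1) * Sc k)"
  by (rule summable_comparison_test[OF _ summable_invsq]) (use Sfun_term_bound[OF assms] in auto)



lemma norm_one_minus_sq:
  fixes a psi :: real
  shows "(norm (1 - of_real a * cis psi))^2 = 1 - 2 * a * cos psi + a^2"
proof -
  have "(norm (1 - of_real a * cis psi))^2 = (1 - a * cos psi)^2 + (a * sin psi)^2"
    by (simp add: cmod_power2)
  also have "\<dots> = 1 - 2 * a * cos psi + (a^2 * (cos psi)^2 + a^2 * (sin psi)^2)"
    by (simp add: power2_diff power_mult_distrib algebra_simps)
  also have "a^2 * (cos psi)^2 + a^2 * (sin psi)^2 = a^2"
    by (metis distrib_left mult.right_neutral sin_cos_squared_add add.commute)
  finally show ?thesis .
qed

lemma div_nat_le: "0 \<le> (x::real) \<Longrightarrow> x / real n \<le> x"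
proof (cases "n = 0")
  case False
  assume x: "0 \<le> x"
  have "x * 1 \<le> x * real n" using False x by (intro mult_left_mono) auto
  then show ?thesis using False by (simp add: divide_le_eq)
qed simp

lemma J_lt1:
  assumes a: "0 \<le> a" "a < 1"
  shows "J a \<phi> = a^2 * cos (2*\<phi>) / 4 + 8/pi * Im (Sfun (of_real a * cis \<phi>))"
proof -
  define \<alpha> where "\<alpha> = of_real a * cis \<phi>"
  have na: "norm \<alpha> = a" using a by (simp add: \<alpha>_def norm_mult)
  define w where "w t = \<alpha> * exp (- \<i> * of_real t)" for t :: real
  have wc: "w t = of_real a * cis (\<phi> - t)" for t
    by (simp add: w_def \<alpha>_def cis_conv_exp mult.assoc exp_add[symmetric] algebra_simps)
  have nw: "norm (w t) = a" for t using a by (simp add: wc norm_mult)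
  have wpow: "(w t)^n = \<alpha>^n * exp (- \<i> * of_nat n * of_real t)" for t n
    by (simp add: w_def power_mult_distrib exp_of_nat_mult[symmetric] mult_ac)
  define f where "f n t = - (\<alpha>^n / of_nat n) * (exp (- \<i> * of_nat n * of_real t) * (of_real (sin t))^2)" for n t
  have fs: "(\<lambda>n. f n t) sums (Ln (1 - w t) * (of_real (sin t))^2)" for t
  proof -
    have "norm (- w t) < 1" using nw a by simp
    from Ln_series'[OF this] have "(\<lambda>n. - ((w t)^n) / of_nat n) sums Ln (1 - w t)" by simp
    from sums_mult2[OF this, of "(of_real (sin t))^2"] show ?thesis
      by (simp add: f_def wpow algebra_simps)
  qed
  have fb: "norm (f n t) \<le> a^n" for n t
  proof -
    have e1: "norm (exp (- \<i> * of_nat n * of_real t)) = 1"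
      by (simp add: norm_exp)
    have "norm (f n t) = (a^n / real n) * (sin t)^2"
      by (simp add: f_def norm_mult norm_divide norm_power na e1)
    also have "\<dots> \<le> (a^n / real n) * 1"
      using a by (intro mult_left_mono) (auto simp: abs_square_le_1 abs_sin_le_one)
    also have "\<dots> \<le> a^n"
      using a by (simp add: div_nat_le)
    finally show ?thesis .
  qed
  have ul: "uniform_limit {0..pi} (\<lambda>n t. \<Sum>i<n. f i t) (\<lambda>t. \<Sum>i. f i t) sequentially"
    by (rule Weierstrass_m_test[OF fb]) (use a in \<open>simp add: summable_geometric\<close>)
  have cont: "continuous_on {0..pi} (\<lambda>t. \<Sum>i<n. f i t)" for n
    unfolding f_def by (intro continuous_intros)
  obtain I Jc where I: "\<And>n. ((\<lambda>t. \<Sum>i<n. f i t) has_integral I n) {0..pi}"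
    and Jc: "((\<lambda>t. \<Sum>i. f i t) has_integral Jc) {0..pi}" and lim: "I \<longlonglongrightarrow> Jc"
    by (rule uniform_limit_integral[OF ul cont]) auto
  define c where "c n = - (\<alpha>^n / of_nat n) * Kc n" for n
  have fi: "(f n has_integral c n) {0..pi}" for n
  proof (cases "n = 0")
    case True
    then show ?thesis unfolding f_def c_def by simp
  next
    case False
    show ?thesis unfolding f_def c_def
      by (intro has_integral_mult_right K_integral False)
  qed
  have "I n = (\<Sum>i<n. c i)" for n
    using has_integral_sum[of "{..<n}" f c "{0..pi}"] fi I[of n]
    by (meson finite_lessThan has_integral_unique)
  then have "I = (\<lambda>n. \<Sum>i<n. c i)" by (rule ext)
  with lim have csums: "c sums Jc" unfolding sums_def by simp
  have c_eq: "c n = (if n = 2 then of_real pi * \<alpha>^2 / 8 else 0) +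
      (if odd n then - 4 * \<i> * (\<alpha>^n * Sc ((n - 1) div 2)) else 0)" for n
  proof (cases "odd n")
    case True
    then have n2: "2 * ((n - 1) div 2) + 1 = n" by presburger
    have "c n = - (\<alpha>^n / of_nat n) * (4 * \<i> / (of_nat n * ((of_nat n)^2 - 4)))"
      using True by (auto simp: c_def Kc_def)
    also have "\<dots> = - 4 * \<i> * (\<alpha>^n * (1 / ((of_nat n)^2 * ((of_nat n)^2 - 4))))"
      by (simp add: power2_eq_square) (simp add: mult_ac)
    moreover have "n \<noteq> 2" using True by auto
    ultimately show ?thesis using True by (simp add: Sc_def n2)
  next
    case False
    then show ?thesis by (auto simp: c_def Kc_def)
  qed
  have s1: "(\<lambda>n. if n = 2 then of_real pi * \<alpha>^2 / 8 else 0) sums (of_real pi * \<alpha>^2 / 8)"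
    using sums_single[of 2 "\<lambda>_. of_real pi * \<alpha>^2 / 8"] by simp
  have s2: "(\<lambda>n. if odd n then - 4 * \<i> * (\<alpha>^n * Sc ((n - 1) div 2)) else 0) sums (- 4 * \<i> * Sfun \<alpha>)"
  proof -
    have "(\<lambda>k. \<alpha> ^ (2*k+1) * Sc k) sums Sfun \<alpha>"
      unfolding Sfun_def using Sfun_summable[of \<alpha>] na a by (simp add: summable_sums)
    then have "(\<lambda>k. - 4 * \<i> * (\<alpha> ^ (2*k+1) * Sc k)) sums (- 4 * \<i> * Sfun \<alpha>)"
      by (rule sums_mult)
    then have "(\<lambda>k. (\<lambda>n. if odd n then - 4 * \<i> * (\<alpha>^n * Sc ((n - 1) div 2)) else 0) (2*k+1))
       sums (- 4 * \<i> * Sfun \<alpha>)" by simp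
    then show ?thesis
      by (subst (asm) sums_mono_reindex) (auto simp: strict_mono_def elim!: oddE)
  qed
  have cs: "c sums (of_real pi * \<alpha>^2 / 8 + - 4 * \<i> * Sfun \<alpha>)"
    unfolding c_eq by (rule sums_add[OF s1 s2])
  have JcV: "Jc = of_real pi * \<alpha>^2 / 8 - 4 * \<i> * Sfun \<alpha>"
    using sums_unique2[OF csums cs] by simp
  have fe: "(\<lambda>t. \<Sum>i. f i t) = (\<lambda>t. Ln (1 - w t) * (of_real (sin t))^2)"
    using fs by (intro ext) (simp add: sums_iff)
  have Jc2: "((\<lambda>t. Ln (1 - w t) * (of_real (sin t))^2) has_integral Jc) {0..pi}"
    using Jc unfolding fe .
  have Jr: "((\<lambda>t. Re (Ln (1 - w t) * (of_real (sin t))^2)) has_integral Re Jc) {0..pi}"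
    using has_integral_linear[OF Jc2 bounded_linear_Re] by (simp add: o_def)
  have pt: "ln (1 - 2 * a * cos (t - \<phi>) + a^2) * (sin t)^2 = 2 * Re (Ln (1 - w t) * (of_real (sin t))^2)" for t
  proof -
    have nz: "1 - w t \<noteq> 0" using nw a by (metis norm_one order_less_irrefl right_minus_eq)
    have pos: "norm (1 - w t) > 0" using nz by simp
    have "1 - 2 * a * cos (t - \<phi>) + a^2 = (norm (1 - w t))^2"
      unfolding wc norm_one_minus_sq by (simp add: cos_diff mult_ac)
    then have "ln (1 - 2 * a * cos (t - \<phi>) + a^2) = 2 * ln (norm (1 - w t))"
      using pos by (simp add: ln_realpow)
    then show ?thesis using nz by (simp flip: of_real_power)
  qed
  have "((\<lambda>t. ln (1 - 2 * a * cos (t - \<phi>) + a^2) * (sin t)^2) has_integral 2 * Re Jc) {0..pi}"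
    unfolding pt by (rule has_integral_mult_right[OF Jr])
  then have "J a \<phi> = (1/pi) * (2 * Re Jc)" unfolding J_def by (simp add: integral_unique)
  also have "\<dots> = Re (\<alpha>^2) / 4 + 8 / pi * Im (Sfun \<alpha>)"
    unfolding JcV by (simp add: field_simps)
  also have "Re (\<alpha>^2) = a^2 * cos (2*\<phi>)"
    using Complex.DeMoivre[of \<phi> 2] by (simp add: \<alpha>_def power_mult_distrib)
  finally show ?thesis by (simp add: \<alpha>_def)
qed



lemma inv_sq_bound_aux: "norm (1 / (of_nat (2*k+3) :: complex) - 1 / of_nat (2*k+1)) \<le> inverse (real (Suc k) ^ 2)"
proof -
  have "1 / (of_nat (2*k+3) :: complex) - 1 / of_nat (2*k+1) = of_real (1 / real (2*k+3) - 1 / real (2*k+1))"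
    by simp
  also have "1 / real (2*k+3) - 1 / real (2*k+1) = - 2 / (real (2*k+3) * real (2*k+1))"
    by (simp add: field_simps)
  finally have "norm (1 / (of_nat (2*k+3) :: complex) - 1 / of_nat (2*k+1)) = 2 / (real (2*k+3) * real (2*k+1))"
    by (simp only: norm_of_real) simp
  also have "\<dots> \<le> inverse (real (Suc k) ^ 2)"
  proof -
    have p: "0 < real (Suc k) ^ 2" by simp
    have le: "2 * real (Suc k) ^ 2 \<le> real (2*k+3) * real (2*k+1)"
      by (simp add: power2_eq_square algebra_simps)
    have "2 / (real (2*k+3) * real (2*k+1)) \<le> 2 / (2 * real (Suc k) ^ 2)"
      by (rule divide_left_mono[OF le]) (use p in auto)
    also have "\<dots> = inverse (real (Suc k) ^ 2)" by (simp add: inverse_eq_divide)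
    finally show ?thesis .
  qed
  finally show ?thesis .
qed

lemma odd_harm_summable:
  fixes \<beta> :: complex
  assumes "norm \<beta> \<le> 1" "\<beta> \<noteq> 1"
  shows "summable (\<lambda>k. \<beta>^k / of_nat (2*k+1))"
proof -
  define c where "c k = 1 / (of_nat (2*k+1) :: complex)" for k
  define g where "g k = \<beta>^k * c k" for k
  have nc: "norm (c k) = 1 / real (2*k+1)" for k
  proof -
    have "c k = of_real (1 / real (2*k+1))" by (simp add: c_def)
    then show ?thesis by (simp only: norm_of_real) simp
  qed
  have g0: "g \<longlonglongrightarrow> 0"
  proof (rule Lim_null_comparison[OF _ LIMSEQ_inverse_real_of_nat])
    show "\<forall>\<^sub>F n in sequentially. norm (g n) \<le> inverse (real (Suc n))"
    proof (rule always_eventually, rule allI)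
      fix n
      have "norm (g n) = norm \<beta> ^ n * (1 / real (2*n+1))"
        by (simp add: g_def nc norm_mult norm_power)
      also have "\<dots> \<le> 1 * (1 / real (2*n+1))"
        by (intro mult_right_mono power_le_one) (auto simp: assms)
      also have "\<dots> \<le> inverse (real (Suc n))"
        by (simp add: divide_simps del: of_nat_Suc)
      finally show "norm (g n) \<le> inverse (real (Suc n))" .
    qed
  qed
  have s1: "summable (\<lambda>k. g k - g (Suc k))"
    using telescope_sums'[OF g0] by (simp add: sums_iff)
  have s2: "summable (\<lambda>k. \<beta>^(Suc k) * (c (Suc k) - c k))"
  proof (rule summable_comparison_test[OF _ summable_invsq])
    show "\<exists>N. \<forall>n\<ge>N. norm (\<beta> ^ Suc n * (c (Suc n) - c n)) \<le> inverse (real (Suc n) ^ 2)"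
    proof (intro exI allI impI)
      fix n :: nat
      have "norm (\<beta> ^ Suc n * (c (Suc n) - c n)) = norm \<beta> ^ Suc n * norm (c (Suc n) - c n)"
        by (simp add: norm_mult norm_power)
      also have "\<dots> \<le> 1 * norm (c (Suc n) - c n)"
        by (intro mult_right_mono power_le_one) (auto simp: assms)
      also have "\<dots> \<le> inverse (real (Suc n) ^ 2)"
      proof -
        have e: "2 * Suc n + 1 = 2*n+3" by simp
        show ?thesis using inv_sq_bound_aux[of n] unfolding c_def e by simp
      qed
      finally show "norm (\<beta> ^ Suc n * (c (Suc n) - c n)) \<le> inverse (real (Suc n) ^ 2)" .
    qed
  qed
  have S: "summable (\<lambda>k. ((g k - g (Suc k)) + \<beta>^(Suc k) * (c (Suc k) - c k)) / (1 - \<beta>))"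
    by (intro summable_divide summable_add s1 s2)
  have eq: "((g k - g (Suc k)) + \<beta>^(Suc k) * (c (Suc k) - c k)) / (1 - \<beta>) = \<beta>^k / of_nat (2*k+1)" for k
  proof -
    have "(g k - g (Suc k)) + \<beta>^(Suc k) * (c (Suc k) - c k) = (1 - \<beta>) * (\<beta>^k * c k)"
      by (simp add: g_def algebra_simps)
    then show ?thesis using assms(2) by (simp add: c_def)
  qed
  show ?thesis using S unfolding eq .
qed



lemma alg2: fixes x :: complex assumes "x\<noteq>0" "x\<noteq>2" "x\<noteq>-2"
  shows "-16 * (1 / (x^2 * (x^2 - 4))) = 4 / x^2 - 1 / (x - 2) + 1 / (x + 2)"
proof -
  have a: "x-2\<noteq>0" "x+2\<noteq>0" using assms by (auto simp: algebra_simps)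
    (metis add.inverse_inverse add_diff_cancel_right' diff_0 minus_diff_eq)+
  have e: "x^2-4 = (x-2)*(x+2)" by (simp add: algebra_simps power2_eq_square)
  have nz: "x^2*(x^2-4) \<noteq> 0" unfolding e using a assms(1) by simp
  have g: "x * (x * (x * x)) - x * (x * 4) \<noteq> 0"
  proof -
    have "x * (x * (x * x)) - x * (x * 4) = x^2*(x^2-4)" by (simp add: algebra_simps power2_eq_square)
    then show ?thesis using nz by simp
  qed
  have "(4 / x^2 - 1 / (x - 2) + 1 / (x + 2)) * (x^2*(x^2-4)) = -16"
    unfolding e using a assms(1) g by (simp add: field_simps) (simp add: divide_eq_eq algebra_simps power2_eq_square power4_eq_xxxx)
  then have "4 / x^2 - 1 / (x - 2) + 1 / (x + 2) = -16 / (x^2*(x^2-4))"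
    by (subst eq_divide_eq) (simp only: if_P[OF nz])
  then show ?thesis by simp
qed

lemma Li2_sums:
  assumes "norm w \<le> 1"
  shows "(\<lambda>m. w^m / (of_nat m)^2) sums Li2 w"
proof -
  have "summable (\<lambda>n. w ^ Suc n / (of_nat (Suc n))^2)"
  proof (rule summable_comparison_test[OF _ summable_invsq], intro exI allI impI)
    fix n :: nat
    have "norm (w ^ Suc n / (of_nat (Suc n))^2) = norm w ^ Suc n / (real (Suc n))^2"
      by (simp add: norm_divide norm_power norm_mult del: of_nat_Suc)
    also have "\<dots> \<le> 1 / (real (Suc n))^2"
      by (intro divide_right_mono power_le_one) (auto simp: assms)
    finally show "norm (w ^ Suc n / (of_nat (Suc n))^2) \<le> inverse ((real (Suc n))^2)"
      by (simp add: inverse_eq_divide)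
  qed
  then have "(\<lambda>n. w ^ Suc n / (of_nat (Suc n))^2) sums Li2 w"
    unfolding Li2_def by (simp add: summable_sums)
  then show ?thesis by (subst (asm) sums_Suc_iff) simp
qed

lemma odd_nz: "(of_nat (2*k+1) :: complex) \<noteq> 0" "(of_nat (2*k+1) :: complex) \<noteq> 2"
  "(of_nat (2*k+1) :: complex) \<noteq> -2"
proof -
  show "(of_nat (2*k+1) :: complex) \<noteq> 0" by (simp only: of_nat_eq_0_iff)
  show "(of_nat (2*k+1) :: complex) \<noteq> 2"
  proof
    assume "(of_nat (2*k+1) :: complex) = 2"
    then have "(of_nat (2*k+1) :: complex) = of_nat 2" by simp
    then have "2*k+1 = 2" by (simp only: of_nat_eq_iff)
    then show False by presburger
  qed
  show "(of_nat (2*k+1) :: complex) \<noteq> -2"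
  proof
    assume "(of_nat (2*k+1) :: complex) = -2"
    then have "Re (of_nat (2*k+1)) = Re (-2::complex)" by (rule arg_cong)
    then show False by simp
  qed
qed

lemma cancel_aux: "(b::complex) \<noteq> 0 \<Longrightarrow> a * b / M / b = a / M"
  by (metis divide_divide_eq_left mult.commute nonzero_mult_divide_mult_cancel_left divide_eq_0_iff)

lemma series_identity:
  fixes z :: complex
  assumes z: "norm z \<le> 1" "z \<noteq> 0" "z^2 \<noteq> 1"
  shows "(z - 1/z) - (z^2 - 1/z^2) * arctanh_ps z + 4 * Li2 z - Li2 (z^2) = -16 * Sfun z"
proof -
  define t where "t k = z^(2*k+1) / of_nat (2*k+1)" for k
  have nz2: "norm (z^2) \<le> 1" using z by (simp add: norm_power power_le_one)
  have "summable (\<lambda>k. z * ((z^2)^k / of_nat (2*k+1)))"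
    by (intro summable_mult odd_harm_summable nz2 z(3))
  moreover have "(\<lambda>k. z * ((z^2)^k / of_nat (2*k+1))) = t"
  proof
    fix k
    have h: "z^(2*k+1) = z * (z^2)^k" by (metis power_add power_mult power_one_right mult.commute)
    show "z * ((z^2)^k / of_nat (2*k+1)) = t k" unfolding t_def by (simp only: h times_divide_eq_right)
  qed
  ultimately have "summable t" by simp
  then obtain T where tT: "t sums T" by (auto simp: summable_def)
  have A: "arctanh_ps z = T"
  proof -
    have te: "(\<lambda>k. (\<lambda>n. if odd n then z ^ n / of_nat n else 0) (2*k+1)) = t"
      by (rule ext) (simp add: t_def)
    have "(\<lambda>k. (\<lambda>n. if odd n then z ^ n / of_nat n else 0) (2*k+1)) sums T"
      unfolding te by (rule tT)
    then have "(\<lambda>n. if odd n then z ^ n / of_nat n else 0) sums T"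
      by (subst (asm) sums_mono_reindex) (auto simp: strict_mono_def elim!: oddE)
    then show ?thesis unfolding arctanh_ps_def by (simp add: sums_iff)
  qed
  define u where "u m = z^m / (of_nat m)^2" for m
  have uL: "u sums Li2 z" unfolding u_def by (rule Li2_sums[OF z(1)])
  have "summable (\<lambda>k. u (2*k+1))"
  proof (rule summable_comparison_test[OF _ summable_invsq], intro exI allI impI)
    fix k :: nat
    have "norm (u (2*k+1)) = norm z ^ (2*k+1) / (real (2*k+1))^2"
      unfolding u_def by (simp add: norm_divide norm_power norm_mult del: of_nat_add of_nat_Suc)
    also have "\<dots> \<le> 1 / (real (2*k+1))^2"
      by (intro divide_right_mono power_le_one) (auto simp: z)
    also have "\<dots> \<le> 1 / (real (Suc k))^2"
      by (intro divide_left_mono power_mono) auto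
    finally show "norm (u (2*k+1)) \<le> inverse ((real (Suc k))^2)"
      by (simp add: inverse_eq_divide)
  qed
  then obtain P where uP: "(\<lambda>k. u (2*k+1)) sums P" by (auto simp: summable_def)
  have so: "(\<lambda>n. if odd n then u n else 0) sums P"
  proof -
    have "(\<lambda>k. (\<lambda>n. if odd n then u n else 0) (2*k+1)) sums P" using uP by simp
    then show ?thesis
      by (subst (asm) sums_mono_reindex) (auto simp: strict_mono_def elim!: oddE)
  qed
  have se: "(\<lambda>n. if even n then u n else 0) sums (Li2 (z^2) / 4)"
  proof -
    have "(\<lambda>k. (z^2)^k / (of_nat k)^2 / 4) sums (Li2 (z^2) / 4)"
      by (intro sums_divide Li2_sums nz2)
    moreover have "(z^2)^k / (of_nat k)^2 / 4 = u (2*k)" for k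
    proof -
      have p: "(z^2)^k = (z^k)^2" by (metis power_mult mult.commute)
      have q: "z^(2*k) = (z^k)^2" by (metis power_mult mult.commute)
      have r: "z^(k*2) = (z^k)^2" by (rule power_mult)
      show ?thesis by (simp add: u_def p q r power_mult_distrib field_simps)
    qed
    ultimately have "(\<lambda>k. (\<lambda>n. if even n then u n else 0) (2*k)) sums (Li2 (z^2) / 4)" by simp
    then show ?thesis
      by (subst (asm) sums_mono_reindex) (auto simp: strict_mono_def elim!: evenE)
  qed
  have "u sums (Li2 (z^2) / 4 + P)"
  proof -
    have "(\<lambda>n. (if even n then u n else 0) + (if odd n then u n else 0)) sums (Li2 (z^2) / 4 + P)"
      by (rule sums_add[OF se so])
    moreover have "(\<lambda>n. (if even n then u n else 0) + (if odd n then u n else 0)) = u"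
      by (rule ext) simp
    ultimately show ?thesis by simp
  qed
  then have LiP: "Li2 z = Li2 (z^2) / 4 + P" using uL sums_unique2 by blast
  have sS: "(\<lambda>k. z^(2*k+1) * Sc k) sums Sfun z"
    unfolding Sfun_def using Sfun_summable[OF z(1)] by (simp add: summable_sums)
  define q where "q k = z^(2*k+1) / (of_nat (2*k+1) - 2)" for k
  have qS: "q sums (z^2 * T - z)"
  proof -
    have "q (Suc k) = z^2 * t k" for k
    proof -
      have "(of_nat (2 * Suc k + 1) :: complex) - 2 = of_nat (2*k+1)" by simp
      then show ?thesis by (simp add: q_def t_def power_add mult_ac power2_eq_square)
    qed
    then have "(\<lambda>k. q (Suc k)) sums (z^2 * T)" using sums_mult[OF tT, of "z^2"] by simp
    then have "q sums (z^2 * T + q 0)" by (simp add: sums_Suc_iff)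
    then show ?thesis by (simp add: q_def)
  qed
  define r where "r k = z^(2*k+1) / (of_nat (2*k+1) + 2)" for k
  have rS: "r sums ((T - z) / z^2)"
  proof -
    have rk: "r k = t (Suc k) / z^2" for k
    proof -
      have N: "(of_nat (2 * Suc k + 1) :: complex) = of_nat (2*k+1) + 2" by simp
      have e: "2 * Suc k + 1 = (2*k+1) + 2" by simp
      have P: "z^(2 * Suc k + 1) = z^(2*k+1) * z^2" unfolding e by (rule power_add)
      have z2: "z^2 \<noteq> 0" using z(2) by simp
      show ?thesis unfolding r_def t_def N P by (simp only: cancel_aux[OF z2])
    qed
    have ts: "(\<lambda>k. t (Suc k)) sums (T - z)"
      using tT by (subst sums_Suc_iff) (simp add: t_def)
    have re: "r = (\<lambda>k. t (Suc k) / z^2)" by (rule ext) (rule rk)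
    show ?thesis unfolding re by (rule sums_divide[OF ts])
  qed
  have "(\<lambda>k. 4 * u (2*k+1) - q k + r k) sums (4 * P - (z^2 * T - z) + (T - z) / z^2)"
    by (intro sums_add sums_diff sums_mult uP qS rS)
  moreover have "4 * u (2*k+1) - q k + r k = -16 * (z^(2*k+1) * Sc k)" for k
  proof -
    have "-16 * (z^(2*k+1) * Sc k) = z^(2*k+1) * (-16 * (1 / ((of_nat (2*k+1))^2 * ((of_nat (2*k+1))^2 - 4))))"
      by (simp add: Sc_def)
    also have "\<dots> = z^(2*k+1) * (4 / (of_nat (2*k+1))^2 - 1 / (of_nat (2*k+1) - 2) + 1 / (of_nat (2*k+1) + 2))"
      by (subst alg2[OF odd_nz]) (rule refl)
    also have "\<dots> = 4 * u (2*k+1) - q k + r k"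
      by (simp add: u_def q_def r_def algebra_simps)
    finally show ?thesis by simp
  qed
  ultimately have "(\<lambda>k. -16 * (z^(2*k+1) * Sc k)) sums (4 * P - (z^2 * T - z) + (T - z) / z^2)" by simp
  moreover have "(\<lambda>k. -16 * (z^(2*k+1) * Sc k)) sums (-16 * Sfun z)" by (intro sums_mult sS)
  ultimately have SV: "-16 * Sfun z = 4 * P - (z^2 * T - z) + (T - z) / z^2"
    using sums_unique2 by blast
  show ?thesis unfolding SV A LiP using z(2) by (simp add: field_simps power2_eq_square)
qed



lemma sin_sq_integral: "((\<lambda>t. (sin t)^2) has_integral pi/2) {0..pi}"
proof -
  have d: "((\<lambda>t. t/2 - sin (2*t)/4) has_vector_derivative (sin t)^2) (at t within {0..pi})" for t
  proof -
    have "((\<lambda>t. t/2 - sin (2*t)/4) has_real_derivative (1/2 - cos (2*t) * 2 / 4)) (at t within {0..pi})"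
      by (auto intro!: derivative_eq_intros)
    moreover have "1/2 - cos (2*t) * 2 / 4 = (sin t)^2"
      using cos_double_sin[of t] by (simp add: field_simps)
    ultimately show ?thesis by (simp add: has_real_derivative_iff_has_vector_derivative)
  qed
  show ?thesis using fundamental_theorem_of_calculus[OF _ d] by simp
qed

lemma Sfun_cont: "continuous_on (cball 0 1) Sfun"
proof -
  have ul: "uniform_limit (cball 0 1) (\<lambda>n z. \<Sum>i<n. z^(2*i+1) * Sc i) (\<lambda>z. \<Sum>i. z^(2*i+1) * Sc i) sequentially"
    by (rule Weierstrass_m_test[OF _ summable_invsq]) (rule Sfun_term_bound, simp)
  have "continuous_on (cball 0 1) (\<lambda>z. \<Sum>i. z^(2*i+1) * Sc i)"
    by (rule uniform_limit_theorem[OF _ ul]) (auto intro!: continuous_intros always_eventually)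
  then show ?thesis unfolding Sfun_def[abs_def] .
qed

lemma x_inv_ge: assumes "0 < (x::real)" shows "x + 1/x - 2 = (1 - x)^2 / x"
  using assms by (simp add: field_simps power2_eq_square)

lemma J_eq1: "J 1 \<phi> = cos (2*\<phi>) / 4 + 8/pi * Im (Sfun (cis \<phi>))"
proof -
  define ak where "ak k = 1 - inverse (real (Suc k)) / 2" for k
  have ak1: "1/2 \<le> ak k" "ak k < 1" for k
  proof -
    have "0 < inverse (real (Suc k))" "inverse (real (Suc k)) \<le> 1" by (auto simp: inverse_le_1_iff)
    then show "1/2 \<le> ak k" "ak k < 1" by (auto simp: ak_def)
  qed
  have akpos: "0 < ak k" for k using ak1[of k] by linarith
  have akmono: "ak k \<le> ak (Suc k)" for k
    unfolding ak_def by (auto simp: field_simps)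
  have aklim: "ak \<longlonglongrightarrow> 1"
  proof -
    have "(\<lambda>k. 1 - inverse (real (Suc k)) / 2) \<longlonglongrightarrow> 1 - 0 / 2"
      by (intro tendsto_intros LIMSEQ_inverse_real_of_nat) simp
    then show ?thesis by (simp add: ak_def[abs_def])
  qed
  define c where "c t = cos (t - \<phi>)" for t
  have c1: "c t \<le> 1" for t by (simp add: c_def)
  define F where "F k t = ln (ak k + 1/ak k - 2 * c t) * (sin t)^2" for k t
  define g where "g t = ln (2 - 2 * c t) * (sin t)^2" for t
  define S where "S = {t \<in> {0..pi}. c t \<noteq> 1}"
  have bigpos: "ak k + 1/ak k - 2 * c t > 0" for k t
  proof -
    have "ak k + 1/ak k - 2 = (1 - ak k)^2 / ak k" by (rule x_inv_ge[OF akpos])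
    also have "\<dots> > 0" using ak1[of k] akpos[of k] by simp
    finally show ?thesis using c1[of t] by linarith
  qed
  have neg: "negligible ({0..pi} - S)"
  proof (rule negligible_subset)
    show "negligible (\<Union> ((\<lambda>n::int. {of_int n * 2 * pi + \<phi>}) ` UNIV))"
      by (rule negligible_countable_Union) auto
    show "{0..pi} - S \<subseteq> \<Union> ((\<lambda>n::int. {of_int n * 2 * pi + \<phi>}) ` UNIV)"
    proof
      fix t assume "t \<in> {0..pi} - S"
      then have "cos (t - \<phi>) = 1" by (auto simp: S_def c_def)
      then obtain n :: int where "t - \<phi> = of_int n * 2 * pi" by (auto simp: cos_one_2pi_int)
      then have "t = of_int n * 2 * pi + \<phi>" by simp
      then show "t \<in> \<Union> ((\<lambda>n::int. {of_int n * 2 * pi + \<phi>}) ` UNIV)" by blast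
    qed
  qed
  have spike: "integral S f = integral {0..pi} f" for f :: "real \<Rightarrow> real"
    by (rule integral_spike_set) (auto intro: negligible_subset[OF neg] simp: S_def)
  have spikei: "f integrable_on {0..pi} \<Longrightarrow> f integrable_on S" for f :: "real \<Rightarrow> real"
    by (erule integrable_spike_set) (auto intro: negligible_subset[OF neg] simp: S_def)
  have Fint: "F k integrable_on {0..pi}" for k
  proof -
    have "continuous_on {0..pi} (F k)"
      unfolding F_def c_def using bigpos[of k, unfolded c_def]
      by (intro continuous_intros) (auto simp: less_imp_neq[symmetric])
    then show ?thesis by (rule integrable_continuous_real)
  qed
  define G where "G x = x^2 * cos (2*\<phi>) / 4 + 8/pi * Im (Sfun (of_real x * cis \<phi>))" for x :: real
  have IF: "integral {0..pi} (F k) = pi * G (ak k) - pi / 2 * ln (ak k)" for k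
  proof -
    have pt: "ln (1 - 2 * ak k * cos (t - \<phi>) + (ak k)^2) * (sin t)^2 = ln (ak k) * (sin t)^2 + F k t" for t
    proof -
      have "1 - 2 * ak k * cos (t - \<phi>) + (ak k)^2 = ak k * (ak k + 1/ak k - 2 * c t)"
        using akpos[of k] by (simp add: c_def field_simps power2_eq_square)
      then have "ln (1 - 2 * ak k * cos (t - \<phi>) + (ak k)^2) = ln (ak k) + ln (ak k + 1/ak k - 2 * c t)"
        using akpos[of k] bigpos[of k t] by (simp add: ln_mult)
      then show ?thesis by (simp add: F_def algebra_simps)
    qed
    have "((\<lambda>t. ln (ak k) * (sin t)^2 + F k t) has_integral (ln (ak k) * (pi/2) + integral {0..pi} (F k))) {0..pi}"
      by (intro has_integral_add has_integral_mult_right sin_sq_integral integrable_integral Fint)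
    then have "J (ak k) \<phi> = (1/pi) * (ln (ak k) * (pi/2) + integral {0..pi} (F k))"
      unfolding J_def pt by (simp add: integral_unique)
    moreover have "J (ak k) \<phi> = G (ak k)" unfolding G_def using ak1[of k] akpos[of k]
      by (intro J_lt1) auto
    ultimately show ?thesis by (simp add: field_simps)
  qed
  have Glim: "(\<lambda>k. G (ak k)) \<longlonglongrightarrow> G 1"
  proof -
    have "(\<lambda>k. of_real (ak k) * cis \<phi>) \<longlonglongrightarrow> of_real 1 * cis \<phi>"
      by (intro tendsto_intros aklim)
    then have "(\<lambda>k. Sfun (of_real (ak k) * cis \<phi>)) \<longlonglongrightarrow> Sfun (of_real 1 * cis \<phi>)"
      by (rule continuous_on_tendsto_compose[OF Sfun_cont])
        (use ak1 akpos in \<open>auto simp: norm_mult less_imp_le intro!: always_eventually\<close>)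
    then show ?thesis unfolding G_def by (intro tendsto_intros aklim) simp_all
  qed
  have IFlim: "(\<lambda>k. integral {0..pi} (F k)) \<longlonglongrightarrow> pi * G 1 - pi / 2 * ln 1"
    unfolding IF by (intro tendsto_intros Glim aklim) simp
  have mc: "g integrable_on S \<and> (\<lambda>k. integral S (F k)) \<longlonglongrightarrow> integral S g"
  proof (rule monotone_convergence_decreasing)
    show "F k integrable_on S" for k by (rule spikei[OF Fint])
    show "F (Suc k) t \<le> F k t" if "t \<in> S" for k t
    proof -
      have "ak (Suc k) + 1/ak (Suc k) \<le> ak k + 1/ak k"
      proof -
        have "ak k + 1/ak k - (ak (Suc k) + 1/ak (Suc k)) =
              (ak (Suc k) - ak k) * (1 - ak k * ak (Suc k)) / (ak k * ak (Suc k))"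
          using akpos[of k] akpos[of "Suc k"] by (simp add: field_simps)
        also have "\<dots> \<ge> 0"
        proof -
          have "ak k * ak (Suc k) \<le> 1 * 1"
            using ak1[of k] ak1[of "Suc k"] akpos[of k] by (intro mult_mono) auto
          then show ?thesis using akmono[of k] akpos[of k] akpos[of "Suc k"] by simp
        qed
        finally show ?thesis by simp
      qed
      then have "ln (ak (Suc k) + 1/ak (Suc k) - 2 * c t) \<le> ln (ak k + 1/ak k - 2 * c t)"
        using bigpos by simp
      then show ?thesis unfolding F_def by (rule mult_right_mono) simp
    qed
    show "(\<lambda>k. F k t) \<longlonglongrightarrow> g t" if "t \<in> S" for t
    proof -
      have "c t < 1" using that c1[of t] by (auto simp: S_def)
      then have "2 - 2 * c t \<noteq> 0" by simp
      moreover have "(\<lambda>k. ak k + 1/ak k - 2 * c t) \<longlonglongrightarrow> 1 + 1/1 - 2 * c t"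
        by (intro tendsto_intros aklim) simp
      ultimately show ?thesis unfolding F_def g_def by (auto intro!: tendsto_intros)
    qed
    show "bounded (range (\<lambda>k. integral S (F k)))"
      unfolding spike by (rule convergent_imp_bounded[OF IFlim])
  qed
  then have "(\<lambda>k. integral {0..pi} (F k)) \<longlonglongrightarrow> integral {0..pi} g" unfolding spike by simp
  then have ig: "integral {0..pi} g = pi * G 1" using IFlim LIMSEQ_unique by fastforce
  have "J 1 \<phi> = (1/pi) * integral {0..pi} g"
    unfolding J_def g_def c_def by simp
  also have "\<dots> = G 1" using ig by simp
  finally show ?thesis by (simp add: G_def)
qed



lemma J_inv:
  assumes a: "a > 1"
  shows "J a \<phi> = J (1/a) \<phi> + ln a"
proof -
  define b where "b = 1/a"
  have b: "0 < b" "b < 1" using a by (auto simp: b_def)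
  have Xpos: "1 - 2 * b * cos (t - \<phi>) + b^2 > 0" for t
  proof -
    have "b * cos (t - \<phi>) \<le> b * 1" using b by (intro mult_left_mono) auto
    moreover have "(1 - b)^2 > 0" using b by simp
    ultimately show ?thesis by (simp add: power2_diff)
  qed
  have pt: "ln (1 - 2 * a * cos (t - \<phi>) + a^2) * (sin t)^2 =
      2 * ln a * (sin t)^2 + ln (1 - 2 * b * cos (t - \<phi>) + b^2) * (sin t)^2" for t
  proof -
    have "1 - 2 * a * cos (t - \<phi>) + a^2 = a^2 * (1 - 2 * b * cos (t - \<phi>) + b^2)"
      using a by (simp add: b_def field_simps power2_eq_square)
    then have "ln (1 - 2 * a * cos (t - \<phi>) + a^2) = ln (a^2) + ln (1 - 2 * b * cos (t - \<phi>) + b^2)"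
      using a Xpos[of t] by (simp add: ln_mult)
    also have "ln (a^2) = 2 * ln a" using a by (simp add: ln_realpow)
    finally show ?thesis by (simp add: algebra_simps)
  qed
  have int: "(\<lambda>t. ln (1 - 2 * b * cos (t - \<phi>) + b^2) * (sin t)^2) integrable_on {0..pi}"
  proof (rule integrable_continuous_real)
    show "continuous_on {0..pi} (\<lambda>t. ln (1 - 2 * b * cos (t - \<phi>) + b^2) * (sin t)^2)"
      using Xpos by (intro continuous_intros) (auto simp: less_imp_neq[symmetric])
  qed
  have "((\<lambda>t. 2 * ln a * (sin t)^2 + ln (1 - 2 * b * cos (t - \<phi>) + b^2) * (sin t)^2) has_integral
        (2 * ln a * (pi/2) + integral {0..pi} (\<lambda>t. ln (1 - 2 * b * cos (t - \<phi>) + b^2) * (sin t)^2))) {0..pi}"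
    by (intro has_integral_add has_integral_mult_right sin_sq_integral integrable_integral int)
  then have "J a \<phi> = (1/pi) * (2 * ln a * (pi/2) + integral {0..pi} (\<lambda>t. ln (1 - 2 * b * cos (t - \<phi>) + b^2) * (sin t)^2))"
    unfolding J_def pt by (simp add: integral_unique)
  also have "\<dots> = ln a + J b \<phi>" unfolding J_def by (simp add: field_simps)
  finally show ?thesis by (simp add: b_def)
qed

theorem lemma4p1:
  fixes \<alpha> :: complex and a \<phi> :: real
  assumes "a \<ge> 0" and "\<alpha> = of_real a * cis \<phi>"
  shows "(0 < cmod \<alpha> \<and> cmod \<alpha> \<le> 1 \<and> \<alpha> \<noteq> 1 \<and> \<alpha> \<noteq> -1 \<longrightarrow>
           J a \<phi> = (cmod \<alpha>)^2 / 4 * cos (2 * \<phi>)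
             - 1 / (2 * pi) * Im ((\<alpha> - 1 / \<alpha>) - (\<alpha>^2 - 1 / \<alpha>^2) * arctanh_ps \<alpha>
                                   + 4 * Li2 \<alpha> - Li2 (\<alpha>^2)))
       \<and> (cmod \<alpha> > 1 \<longrightarrow>
           (\<forall>b \<psi>. b \<ge> 0 \<and> \<alpha> / of_real ((cmod \<alpha>)^2) = of_real b * cis \<psi> \<longrightarrow>
                J a \<phi> = J b \<psi> + ln (cmod \<alpha>)))"
proof (intro conjI impI allI)
  have na: "cmod \<alpha> = a" using assms by (simp add: norm_mult)
  {
    assume h: "0 < cmod \<alpha> \<and> cmod \<alpha> \<le> 1 \<and> \<alpha> \<noteq> 1 \<and> \<alpha> \<noteq> -1"
    then have a01: "0 < a" "a \<le> 1" using na by auto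
    have JS: "J a \<phi> = a^2 * cos (2*\<phi>) / 4 + 8/pi * Im (Sfun \<alpha>)"
    proof (cases "a = 1")
      case True
      then show ?thesis using J_eq1[of \<phi>] assms(2) by simp
    next
      case False
      then show ?thesis using J_lt1[of a \<phi>] a01 assms(2) by simp
    qed
    have z2: "\<alpha>^2 \<noteq> 1" using h by (simp add: power2_eq_1_iff)
    have "\<alpha> \<noteq> 0" using h by auto
    from series_identity[OF _ this z2] h
    have SI: "(\<alpha> - 1/\<alpha>) - (\<alpha>^2 - 1/\<alpha>^2) * arctanh_ps \<alpha> + 4 * Li2 \<alpha> - Li2 (\<alpha>^2) = -16 * Sfun \<alpha>"
      by simp
    show "J a \<phi> = (cmod \<alpha>)^2 / 4 * cos (2 * \<phi>)
             - 1 / (2 * pi) * Im ((\<alpha> - 1 / \<alpha>) - (\<alpha>^2 - 1 / \<alpha>^2) * arctanh_ps \<alpha>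
                                   + 4 * Li2 \<alpha> - Li2 (\<alpha>^2))"
      unfolding SI JS na by simp
  }
  {
    fix b \<psi>
    assume h1: "cmod \<alpha> > 1"
    assume h2: "b \<ge> 0 \<and> \<alpha> / of_real ((cmod \<alpha>)^2) = of_real b * cis \<psi>"
    have a1: "a > 1" using h1 na by simp
    have e: "\<alpha> / of_real ((cmod \<alpha>)^2) = of_real (1/a) * cis \<phi>"
      using a1 unfolding na by (simp add: assms(2) power2_eq_square field_simps)
    with h2 have e2: "of_real (1/a) * cis \<phi> = of_real b * cis \<psi>" by simp
    then have "norm (of_real (1/a) * cis \<phi>) = norm (of_real b * cis \<psi> :: complex)" by simp
    then have b: "b = 1/a" using a1 h2 by (simp add: norm_mult norm_divide)
    then have "cis \<phi> = cis \<psi>" using e2 a1 by simp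
    then have cs: "cos \<phi> = cos \<psi>" "sin \<phi> = sin \<psi>"
      by (metis cis.sel(1), metis cis.sel(2))
    have "J b \<psi> = J (1/a) \<phi>" unfolding b J_def by (simp add: cos_diff cs)
    then show "J a \<phi> = J b \<psi> + ln (cmod \<alpha>)" using J_inv[OF a1, of \<phi>] na by simp
  }
qed


end
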